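(* Let $G$ be a clique tree in which every block is a clique on at least $3$ vertices. Let $v$ be a cut vertex of $G$ and let $K_m$ ($m\ge 3$) be a pendant block of $G$ containing $v$. Let $G_1$ be the subgraph of $G$ induced by $V(G)\setminus (V(K_m)\setminus\{v\})$, so that $G=G_1\oplus_v K_m$. Then $$Z(G)=Z(G_1\oplus_v K_m)=Z(G_1)+Z(K_m)-1 = Z(G_1)+m-2.$$
   Context: All graphs are finite, simple and connected. A cut vertex of $G$ is a vertex $v$ with $G-v$ disconnected. A block is a maximal connected subgraph without a cut vertex of its own. A clique tree is a connected graph each of whose blocks is a complete graph (clique). A pendant block is a block containing exactly one cut vertex of $G$. If $G-v$ consists of two disjoint parts $W_1,W_2$ and $G_i$ is the subgraph induced by $\{v\}\cup V(W_i)$, then $G$ is the vertex-sum $G_1\oplus_v G_2$. Zero forcing: each vertex is coloured blue or white; the colour-change rule says that if a blue vertex $u$ has exactly one white neighbour $w$, then $w$ becomes blue. A set $S\subseteq V(G)$ is a zero forcing set if colouring $S$ blue and the rest white, repeated application of the rule turns all vertices blue. $Z(G)$, the zero forcing number, is the minimum size of a zero forcing set; in particular $Z(K_m)=m-1$. *)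

theory Defs
  imports Main
begin

definition graph :: "'a set \<Rightarrow> ('a \<Rightarrow> 'a \<Rightarrow> bool) \<Rightarrow> bool" where
  "graph V E \<longleftrightarrow> finite V \<and> (\<forall>u w. E u w \<longrightarrow> u \<in> V \<and> w \<in> V \<and> u \<noteq> w \<and> E w u)"

definition induced :: "('a \<Rightarrow> 'a \<Rightarrow> bool) \<Rightarrow> 'a set \<Rightarrow> 'a \<Rightarrow> 'a \<Rightarrow> bool" where
  "induced E S = (\<lambda>u w. E u w \<and> u \<in> S \<and> w \<in> S)"

definition connected_on :: "'a set \<Rightarrow> ('a \<Rightarrow> 'a \<Rightarrow> bool) \<Rightarrow> bool" where
  "connected_on S E \<longleftrightarrow> S \<noteq> {} \<and> (\<forall>u\<in>S. \<forall>w\<in>S. (induced E S)\<^sup>*\<^sup>* u w)"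

definition cut_vertex :: "'a set \<Rightarrow> ('a \<Rightarrow> 'a \<Rightarrow> bool) \<Rightarrow> 'a \<Rightarrow> bool" where
  "cut_vertex S E v \<longleftrightarrow> v \<in> S \<and>
     (\<exists>u\<in>S - {v}. \<exists>w\<in>S - {v}. \<not> (induced E (S - {v}))\<^sup>*\<^sup>* u w)"

definition nonsep :: "'a set \<Rightarrow> ('a \<Rightarrow> 'a \<Rightarrow> bool) \<Rightarrow> 'a set \<Rightarrow> bool" where
  "nonsep V E B \<longleftrightarrow> B \<subseteq> V \<and> connected_on B E \<and> (\<forall>x. \<not> cut_vertex B E x)"

definition block :: "'a set \<Rightarrow> ('a \<Rightarrow> 'a \<Rightarrow> bool) \<Rightarrow> 'a set \<Rightarrow> bool" where
  "block V E B \<longleftrightarrow> nonsep V E B \<and> (\<forall>C. nonsep V E C \<and> B \<subseteq> C \<longrightarrow> C = B)"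

definition is_clique :: "('a \<Rightarrow> 'a \<Rightarrow> bool) \<Rightarrow> 'a set \<Rightarrow> bool" where
  "is_clique E B \<longleftrightarrow> (\<forall>u\<in>B. \<forall>w\<in>B. u \<noteq> w \<longrightarrow> E u w)"

definition clique_tree :: "'a set \<Rightarrow> ('a \<Rightarrow> 'a \<Rightarrow> bool) \<Rightarrow> bool" where
  "clique_tree V E \<longleftrightarrow> graph V E \<and> connected_on V E \<and> (\<forall>B. block V E B \<longrightarrow> is_clique E B)"

definition pendant_block :: "'a set \<Rightarrow> ('a \<Rightarrow> 'a \<Rightarrow> bool) \<Rightarrow> 'a set \<Rightarrow> bool" where
  "pendant_block V E B \<longleftrightarrow> block V E B \<and> card {x\<in>B. cut_vertex V E x} = 1"

definition force_step :: "'a set \<Rightarrow> ('a \<Rightarrow> 'a \<Rightarrow> bool) \<Rightarrow> 'a set \<Rightarrow> 'a set \<Rightarrow> bool" where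
  "force_step V E Bl Bl' \<longleftrightarrow>
     (\<exists>u\<in>Bl. \<exists>w. {x\<in>V. E u x} - Bl = {w} \<and> Bl' = insert w Bl)"

definition zero_forcing_set :: "'a set \<Rightarrow> ('a \<Rightarrow> 'a \<Rightarrow> bool) \<Rightarrow> 'a set \<Rightarrow> bool" where
  "zero_forcing_set V E S \<longleftrightarrow> S \<subseteq> V \<and> (force_step V E)\<^sup>*\<^sup>* S V"

definition zf_number :: "'a set \<Rightarrow> ('a \<Rightarrow> 'a \<Rightarrow> bool) \<Rightarrow> nat" where
  "zf_number V E = (LEAST k. \<exists>S. zero_forcing_set V E S \<and> card S = k)"

end

theory Submission
  imports Defs "HOL-Library.Transitive_Closure_Table"
begin

lemma path_reach:
  assumes "rtrancl_path R a xs b" "\<forall>p q. R p q \<longrightarrow> E p q"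
    "set (a#xs) \<subseteq> C" "set (a#xs) \<inter> D = {}"
  shows "(induced E (C - D))\<^sup>*\<^sup>* a b"
  using assms
proof (induction rule: rtrancl_path.induct)
  case (base x) then show ?case by simp
next
  case (step x y ys z)
  have "induced E (C - D) x y" using step by (auto simp: induced_def)
  moreover have "(induced E (C - D))\<^sup>*\<^sup>* y z" using step by auto
  ultimately show ?case by (rule converse_rtranclp_into_rtranclp)
qed

lemma path_end_in: "rtrancl_path R a xs b \<Longrightarrow> b \<in> set (a#xs)"
  by (induction rule: rtrancl_path.induct) auto

lemma path_set_sub: "rtrancl_path (induced E S) a xs b \<Longrightarrow> set xs \<subseteq> S"
  by (induction rule: rtrancl_path.induct) (auto simp: induced_def)

lemma sym_rtc:
  assumes "\<forall>u w. E u w \<longrightarrow> E w u" "(induced E S)\<^sup>*\<^sup>* a b"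
  shows "(induced E S)\<^sup>*\<^sup>* b a"
  using assms(2)
proof (induction rule: rtranclp_induct)
  case base then show ?case by simp
next
  case (step y z)
  have "induced E S z y" using step(2) assms(1) by (auto simp: induced_def)
  then show ?case using step(3) by (rule converse_rtranclp_into_rtranclp)
qed

lemma clique_join:
  assumes "\<forall>u w. E u w \<longrightarrow> E w u" "K \<subseteq> S" "is_clique E K"
    "(induced E S)\<^sup>*\<^sup>* u q1" "(induced E S)\<^sup>*\<^sup>* w q2" "q1 \<in> K" "q2 \<in> K"
  shows "(induced E S)\<^sup>*\<^sup>* u w"
proof -
  have "(induced E S)\<^sup>*\<^sup>* q1 q2"
  proof (cases "q1 = q2")
    case False
    then have "induced E S q1 q2" using assms by (auto simp: induced_def is_clique_def)
    then show ?thesis by simp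
  qed simp
  moreover have "(induced E S)\<^sup>*\<^sup>* q2 w" using sym_rtc[OF assms(1,5)] .
  ultimately show ?thesis using assms(4) by (meson rtranclp_trans)
qed

lemma split_path:
  assumes "rtrancl_path R y ys z" "y#ys = as @ c # bs"
  shows "rtrancl_path R c bs z \<and> (\<exists>as'. rtrancl_path R y as' c \<and> set (y#as') = set (as@[c]))"
proof (cases as)
  case Nil
  then show ?thesis using assms by (auto intro: rtrancl_path.base)
next
  case (Cons a as0)
  then have "ys = as0 @ c # bs" "a = y" using assms(2) by auto
  then have "rtrancl_path R y (as0 @ c # bs) z" using assms(1) by simp
  then obtain "rtrancl_path R y (as0 @ [c]) c" "rtrancl_path R c bs z"
    by (rule rtrancl_path_appendE)
  then show ?thesis using Cons \<open>a = y\<close> by (intro conjI exI[of _ "as0@[c]"]) auto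
qed

lemma pendant_nbr:
  assumes g: "graph V E" and bl: "block V E K" and cl: "is_clique E K"
    and cK: "card K \<ge> 2" and xK: "x \<in> K" and ncut: "\<not> cut_vertex V E x"
    and exy: "E x y"
  shows "y \<in> K"
proof (rule ccontr)
  assume yK: "y \<notin> K"
  have sym: "\<forall>u w. E u w \<longrightarrow> E w u" using g by (auto simp: graph_def)
  have KV: "K \<subseteq> V" using bl by (auto simp: block_def nonsep_def)
  have fK: "finite K" using cK card.infinite by force
  have "\<exists>z. z \<in> K - {x}"
  proof (rule ccontr)
    assume "\<not> ?thesis" then have "K \<subseteq> {x}" by auto
    then have "card K \<le> 1" using card_mono[of "{x}" K] by simp
    with cK show False by simp
  qed
  then obtain z where zK: "z \<in> K" "z \<noteq> x" by auto
  have yV: "y \<in> V" "y \<noteq> x" using g exy by (auto simp: graph_def)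
  have xV: "x \<in> V" using xK KV by auto
  have "(induced E (V - {x}))\<^sup>*\<^sup>* y z"
    using ncut xV yV zK KV by (auto simp: cut_vertex_def)
  then obtain xs where "rtrancl_path (induced E (V - {x})) y xs z"
    by (auto simp: rtranclp_eq_rtrancl_path)
  then obtain ys where P: "rtrancl_path (induced E (V - {x})) y ys z" and dis: "distinct (y#ys)"
    by (rule rtrancl_path_distinct) auto
  have PV: "set (y#ys) \<subseteq> V - {x}" using path_set_sub[OF P] yV by auto
  define C where "C = K \<union> set (y#ys)"
  have CV: "C \<subseteq> V" using KV PV by (auto simp: C_def)
  have RE: "\<forall>p q. induced E (V - {x}) p q \<longrightarrow> E p q" by (auto simp: induced_def)
  have zin: "z \<in> set (y#ys)" using path_end_in[OF P] .
  have key: "\<exists>q\<in>K - {r}. (induced E (C - {r}))\<^sup>*\<^sup>* c q" if cC: "c \<in> C - {r}" for c r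
  proof (cases "c \<in> K")
    case True then show ?thesis using cC by auto
  next
    case False
    then have "c \<in> set (y#ys)" using cC by (auto simp: C_def)
    then obtain as bs where sp: "y#ys = as @ c # bs" by (meson split_list)
    from split_path[OF P sp] obtain as' where
      P2: "rtrancl_path (induced E (V - {x})) c bs z" and
      P1: "rtrancl_path (induced E (V - {x})) y as' c" and s1: "set (y#as') = set (as@[c])"
      by blast
    have sub2: "set (c#bs) \<subseteq> C" using sp by (auto simp: C_def)
    show ?thesis
    proof (cases "r \<in> set (c#bs)")
      case False
      have "(induced E (C - {r}))\<^sup>*\<^sup>* c z"
        using path_reach[OF P2 RE sub2] False by auto
      moreover have "z \<noteq> r" using path_end_in[OF P2] False by auto
      ultimately show ?thesis using zK by auto
    next
      case True
      then have rbs: "r \<in> set bs" using cC by auto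
      then have "r \<notin> set (as @ [c])" using dis sp by auto
      then have "set (y#as') \<inter> {r} = {}" using s1 by auto
      moreover have "set (y#as') \<subseteq> C" using s1 sp by (auto simp: C_def)
      ultimately have "(induced E (C - {r}))\<^sup>*\<^sup>* y c"
        using path_reach[OF P1 RE] by auto
      then have r1: "(induced E (C - {r}))\<^sup>*\<^sup>* c y" using sym_rtc[OF sym] by blast
      have rx: "r \<noteq> x" using rbs sp PV by auto
      have "y \<in> set (as @ [c])" using s1 by (metis list.set_intros(1))
      then have ry: "y \<noteq> r" using \<open>r \<notin> set (as @ [c])\<close> by auto
      have "induced E (C - {r}) y x" using sym exy rx ry xK by (auto simp: induced_def C_def)
      then have "(induced E (C - {r}))\<^sup>*\<^sup>* c x" using r1 by (meson rtranclp.rtrancl_into_rtrancl)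
      then show ?thesis using xK rx by auto
    qed
  qed
  have key0: "\<exists>q\<in>K. (induced E C)\<^sup>*\<^sup>* c q" if cC: "c \<in> C" for c
  proof (cases "c \<in> K")
    case True then show ?thesis by auto
  next
    case False
    then have "c \<in> set (y#ys)" using cC by (auto simp: C_def)
    then obtain as bs where sp: "y#ys = as @ c # bs" by (meson split_list)
    from split_path[OF P sp] have P2: "rtrancl_path (induced E (V - {x})) c bs z" by blast
    have sub2: "set (c#bs) \<subseteq> C" using sp by (auto simp: C_def)
    have "(induced E (C - {}))\<^sup>*\<^sup>* c z" using path_reach[OF P2 RE sub2, of "{}"] by simp
    then show ?thesis using zK by auto
  qed
  have KC: "K \<subseteq> C" by (auto simp: C_def)
  have "nonsep V E C"
    unfolding nonsep_def
  proof (intro conjI allI)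
    show "C \<subseteq> V" by (rule CV)
    show "connected_on C E"
      unfolding connected_on_def
    proof (intro conjI ballI)
      show "C \<noteq> {}" using zK by (auto simp: C_def)
      fix u w assume "u \<in> C" "w \<in> C"
      then obtain q1 q2 where "q1 \<in> K" "q2 \<in> K" "(induced E C)\<^sup>*\<^sup>* u q1" "(induced E C)\<^sup>*\<^sup>* w q2"
        using key0 by blast
      then show "(induced E C)\<^sup>*\<^sup>* u w"
        using clique_join[OF sym KC cl] by blast
    qed
    fix r
    show "\<not> cut_vertex C E r"
    proof
      assume "cut_vertex C E r"
      then obtain u w where "u \<in> C" "u \<noteq> r" "w \<in> C" "w \<noteq> r" "\<not> (induced E (C - {r}))\<^sup>*\<^sup>* u w"
        unfolding cut_vertex_def by blast
      moreover obtain q1 q2 where "q1 \<in> K - {r}" "q2 \<in> K - {r}"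
        "(induced E (C - {r}))\<^sup>*\<^sup>* u q1" "(induced E (C - {r}))\<^sup>*\<^sup>* w q2"
        using key \<open>u \<in> C\<close> \<open>u \<noteq> r\<close> \<open>w \<in> C\<close> \<open>w \<noteq> r\<close> by blast
      moreover have "is_clique E (K - {r})" using cl by (auto simp: is_clique_def)
      moreover have "K - {r} \<subseteq> C - {r}" using KC by auto
      ultimately show False
        using clique_join[OF sym, of "K - {r}" "C - {r}"] by blast
    qed
  qed
  moreover have "K \<subseteq> C" by (auto simp: C_def)
  ultimately have "C = K" using bl by (auto simp: block_def)
  then show False using yK by (auto simp: C_def)
qed


lemma zf_le: "zero_forcing_set V E S \<Longrightarrow> zf_number V E \<le> card S"
  unfolding zf_number_def by (rule Least_le) blast

lemma zf_ex: "\<exists>S. zero_forcing_set V E S \<and> card S = zf_number V E"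
proof -
  have "zero_forcing_set V E V" by (simp add: zero_forcing_set_def)
  then have "\<exists>k S. zero_forcing_set V E S \<and> card S = k" by blast
  then show ?thesis unfolding zf_number_def by (rule LeastI_ex)
qed

lemma twins_step:
  assumes "a \<in> V" "b \<in> V" "a \<noteq> b" "a \<notin> Bl" "b \<notin> Bl"
    "\<forall>u. E u a \<longrightarrow> u \<noteq> b \<longrightarrow> E u b" "\<forall>u. E u b \<longrightarrow> u \<noteq> a \<longrightarrow> E u a"
    "force_step V E Bl Bl'"
  shows "a \<notin> Bl' \<and> b \<notin> Bl'"
proof -
  obtain u w where u: "u \<in> Bl" "{x\<in>V. E u x} - Bl = {w}" "Bl' = insert w Bl"
    using assms(8) by (auto simp: force_step_def)
  have "w \<noteq> a"
  proof
    assume "w = a"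
    then have "E u a" using u by auto
    moreover have "u \<noteq> b" using u assms by auto
    ultimately have "E u b" using assms by auto
    then have "b \<in> {x\<in>V. E u x} - Bl" using assms by auto
    then show False using u \<open>w = a\<close> assms by auto
  qed
  moreover have "w \<noteq> b"
  proof
    assume "w = b"
    then have "E u b" using u by auto
    moreover have "u \<noteq> a" using u assms by auto
    ultimately have "E u a" using assms by auto
    then have "a \<in> {x\<in>V. E u x} - Bl" using assms by auto
    then show False using u \<open>w = b\<close> assms by auto
  qed
  ultimately show ?thesis using u assms by auto
qed

lemma twins_zf:
  assumes "zero_forcing_set V E S" "a \<in> V" "b \<in> V" "a \<noteq> b"
    "\<forall>u. E u a \<longrightarrow> u \<noteq> b \<longrightarrow> E u b" "\<forall>u. E u b \<longrightarrow> u \<noteq> a \<longrightarrow> E u a"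
  shows "a \<in> S \<or> b \<in> S"
proof (rule ccontr)
  assume "\<not> ?thesis"
  have "(force_step V E)\<^sup>*\<^sup>* S V" using assms(1) by (simp add: zero_forcing_set_def)
  then have "a \<notin> V \<and> b \<notin> V"
  proof (induction rule: rtranclp_induct)
    case base then show ?case using \<open>\<not> (a \<in> S \<or> b \<in> S)\<close> by auto
  next
    case (step y z) then show ?case using twins_step[OF assms(2,3,4) _ _ assms(5,6)] by blast
  qed
  then show False using assms by auto
qed

lemma proj_step:
  assumes "V1 \<subseteq> V" "X \<subseteq> V1" "u \<in> Bl" "{x\<in>V. E u x} - Bl = {w}"
    "w \<in> V1 - X \<Longrightarrow> u \<in> V1"
  shows "(force_step V1 (induced E V1))\<^sup>*\<^sup>* (Bl \<inter> V1 \<union> X) (insert w Bl \<inter> V1 \<union> X)"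
proof (cases "w \<in> V1 - X")
  case False
  then have "insert w Bl \<inter> V1 \<union> X = Bl \<inter> V1 \<union> X" by auto
  then show ?thesis by simp
next
  case True
  then have uV: "u \<in> V1" using assms by auto
  have "{x\<in>V1. induced E V1 u x} - (Bl \<inter> V1 \<union> X) = ({x\<in>V. E u x} - Bl) \<inter> V1 - X"
    using uV assms(1) by (auto simp: induced_def)
  also have "\<dots> = {w}" using True assms(4) by auto
  finally have "force_step V1 (induced E V1) (Bl \<inter> V1 \<union> X) (insert w (Bl \<inter> V1 \<union> X))"
    unfolding force_step_def using uV assms(3) by blast
  moreover have "insert w (Bl \<inter> V1 \<union> X) = insert w Bl \<inter> V1 \<union> X" using True by auto
  ultimately show ?thesis by simp
qed

lemma clique_zf:
  assumes "finite K" "is_clique E K" "card K \<ge> 2"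
  shows "zf_number K (induced E K) = card K - 1"
proof -
  obtain S where S: "zero_forcing_set K (induced E K) S" "card S = zf_number K (induced E K)"
    using zf_ex by blast
  have SK: "S \<subseteq> K" using S by (simp add: zero_forcing_set_def)
  have "\<forall>a\<in>K - S. \<forall>b\<in>K - S. a = b"
  proof (intro ballI, rule ccontr)
    fix a b assume ab: "a \<in> K - S" "b \<in> K - S" "a \<noteq> b"
    have "a \<in> S \<or> b \<in> S"
      by (rule twins_zf[OF S(1)]) (use ab assms(2) in \<open>auto simp: induced_def is_clique_def\<close>)
    then show False using ab by auto
  qed
  then have "card (K - S) \<le> 1" using assms(1) by (simp add: card_le_Suc0_iff_eq)
  moreover have "card (K - S) = card K - card S" using SK assms(1) by (simp add: card_Diff_subset finite_subset)
  moreover have "card S \<le> card K" using SK assms(1) by (simp add: card_mono)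
  ultimately have lo: "card K - 1 \<le> zf_number K (induced E K)" using S by linarith
  obtain w where wK: "w \<in> K" using assms by fastforce
  have "\<exists>x. x \<in> K - {w}"
  proof (rule ccontr)
    assume "\<not> ?thesis" then have "K \<subseteq> {w}" by auto
    then have "card K \<le> 1" using card_mono[of "{w}" K] by simp
    with assms show False by simp
  qed
  then obtain x where x: "x \<in> K" "x \<noteq> w" by auto
  have "{y\<in>K. induced E K x y} - (K - {w}) = {w}"
    using x wK assms(2) by (auto simp: induced_def is_clique_def)
  then have "force_step K (induced E K) (K - {w}) (insert w (K - {w}))"
    unfolding force_step_def using x by blast
  moreover have "insert w (K - {w}) = K" using wK by auto
  ultimately have "zero_forcing_set K (induced E K) (K - {w})"
    by (auto simp: zero_forcing_set_def)
  then have "zf_number K (induced E K) \<le> card K - 1"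
    using zf_le wK assms(1) by fastforce
  with lo show ?thesis by simp
qed


theorem corollary2p5:
  fixes V :: "'a set" and E :: "'a \<Rightarrow> 'a \<Rightarrow> bool" and v :: 'a and K :: "'a set" and m :: nat
  assumes "clique_tree V E"
    and "\<forall>B. block V E B \<longrightarrow> card B \<ge> 3"
    and "cut_vertex V E v"
    and "pendant_block V E K" and "v \<in> K"
    and "m = card K" and "m \<ge> 3"
  shows "zf_number (V - (K - {v})) (induced E (V - (K - {v})))
           + zf_number K (induced E K) - 1 = zf_number V E
       \<and> zf_number V E = zf_number (V - (K - {v})) (induced E (V - (K - {v}))) + m - 2"
proof -
  have g: "graph V E" using assms(1) by (simp add: clique_tree_def)
  have fV: "finite V" using g by (simp add: graph_def)
  have gE: "\<And>u x. E u x \<Longrightarrow> u \<in> V \<and> x \<in> V \<and> u \<noteq> x \<and> E x u" using g by (simp add: graph_def)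
  have bl: "block V E K" using assms(4) by (simp add: pendant_block_def)
  have cl: "is_clique E K" using assms(1) bl by (simp add: clique_tree_def)
  have KV: "K \<subseteq> V" using bl by (auto simp: block_def nonsep_def)
  have fK: "finite K" using KV fV finite_subset by blast
  have cK: "card K \<ge> 3" using assms(6,7) by simp
  have vV: "v \<in> V" using assms(5) KV by auto
  have cutset: "{x\<in>K. cut_vertex V E x} = {v}"
  proof -
    have "card {x\<in>K. cut_vertex V E x} = 1" using assms(4) by (simp add: pendant_block_def)
    then obtain a where "{x\<in>K. cut_vertex V E x} = {a}" by (rule card_1_singletonE)
    moreover have "v \<in> {x\<in>K. cut_vertex V E x}" using assms(3,5) by simp
    ultimately show ?thesis by auto
  qed
  have F2: "y \<in> K" if "x \<in> K - {v}" "E x y" for x y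
  proof (rule pendant_nbr[OF g bl cl _ _ _ that(2)])
    show "2 \<le> card K" using cK by simp
    show "x \<in> K" using that by simp
    show "\<not> cut_vertex V E x" using cutset that by auto
  qed
  define V1 where "V1 = V - (K - {v})"
  define E1 where "E1 = induced E V1"
  have V1V: "V1 \<subseteq> V" by (auto simp: V1_def)
  have vV1: "v \<in> V1" using vV by (auto simp: V1_def)
  have fV1: "finite V1" using V1V fV finite_subset by blast
  have ZK: "zf_number K (induced E K) = m - 1"
    using clique_zf[OF fK cl] cK assms(6) by simp
  have lower: "zf_number V1 E1 + m - 2 \<le> zf_number V E"
  proof -
    obtain S where S: "zero_forcing_set V E S" "card S = zf_number V E" using zf_ex by blast
    have SV: "S \<subseteq> V" and chain: "(force_step V E)\<^sup>*\<^sup>* S V" using S by (auto simp: zero_forcing_set_def)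
    have fS: "finite S" using SV fV finite_subset by blast
    have tw: "a = b" if "a \<in> K - {v} - S" "b \<in> K - {v} - S" for a b
    proof (rule ccontr)
      assume ab: "a \<noteq> b"
      have "a \<in> S \<or> b \<in> S"
      proof (rule twins_zf[OF S(1)])
        show "a \<in> V" "b \<in> V" "a \<noteq> b" using that KV ab by auto
        show "\<forall>u. E u a \<longrightarrow> u \<noteq> b \<longrightarrow> E u b"
        proof (intro allI impI)
          fix u assume "E u a" "u \<noteq> b"
          then have "u \<in> K" using F2[of a u] gE[of u a] that by auto
          then show "E u b" using cl \<open>u \<noteq> b\<close> that by (auto simp: is_clique_def)
        qed
        show "\<forall>u. E u b \<longrightarrow> u \<noteq> a \<longrightarrow> E u a"
        proof (intro allI impI)
          fix u assume "E u b" "u \<noteq> a"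
          then have "u \<in> K" using F2[of b u] gE[of u b] that by auto
          then show "E u a" using cl \<open>u \<noteq> a\<close> that by (auto simp: is_clique_def)
        qed
      qed
      then show False using that by auto
    qed
    have cardK1: "card (K - {v}) = m - 1" using assms(5,6) fK by simp
    show ?thesis
    proof (cases "K - {v} \<subseteq> S")
      case True
      define S' where "S' = S \<inter> V1 \<union> {v}"
      have "(force_step V1 E1)\<^sup>*\<^sup>* (S \<inter> V1 \<union> {v}) (B \<inter> V1 \<union> {v})"
        if "(force_step V E)\<^sup>*\<^sup>* S B" for B
        using that
      proof (induction rule: rtranclp_induct)
        case base then show ?case by simp
      next
        case (step y z)
        obtain u w where u: "u \<in> y" "{x\<in>V. E u x} - y = {w}" "z = insert w y"
          using step(2) by (auto simp: force_step_def)
        have "(force_step V1 E1)\<^sup>*\<^sup>* (y \<inter> V1 \<union> {v}) (insert w y \<inter> V1 \<union> {v})"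
          unfolding E1_def
        proof (rule proj_step[where E=E and u=u, OF V1V _ u(1,2)])
          show "{v} \<subseteq> V1" using vV1 by simp
          assume w: "w \<in> V1 - {v}"
          have "E u w" using u by auto
          then show "u \<in> V1" using F2[of u w] gE[of u w] w by (auto simp: V1_def)
        qed
        then show ?case using step(3) u(3) by simp
      qed
      then have "(force_step V1 E1)\<^sup>*\<^sup>* S' (V \<inter> V1 \<union> {v})" using chain unfolding S'_def
        by blast
      moreover have "V \<inter> V1 \<union> {v} = V1" using V1V vV1 by auto
      ultimately have "(force_step V1 E1)\<^sup>*\<^sup>* S' V1" by simp
      then have zS': "zero_forcing_set V1 E1 S'" using vV1 by (auto simp: zero_forcing_set_def S'_def)
      have "S = S \<inter> V1 \<union> (K - {v})" using True SV by (auto simp: V1_def)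
      moreover have "(S \<inter> V1) \<inter> (K - {v}) = {}" by (auto simp: V1_def)
      ultimately have "card S = card (S \<inter> V1) + (m - 1)"
        using fS fK cardK1 card_Un_disjoint[of "S \<inter> V1" "K - {v}"] by simp
      moreover have "card S' \<le> card (S \<inter> V1) + 1" unfolding S'_def
        using fS by (simp add: card_insert_if)
      ultimately show ?thesis using zf_le[OF zS'] S(2) assms(7) by linarith
    next
      case False
      then obtain w where w: "w \<in> K - {v}" "w \<notin> S" by auto
      have KS: "K - {v, w} \<subseteq> S" using tw w by blast
      define I where "I B \<longleftrightarrow> K - {v, w} \<subseteq> B \<and> (w \<in> B \<longrightarrow> v \<in> B)" for B
      have "I B \<and> (force_step V1 E1)\<^sup>*\<^sup>* (S \<inter> V1 \<union> {}) (B \<inter> V1 \<union> {})"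
        if "(force_step V E)\<^sup>*\<^sup>* S B" for B
        using that
      proof (induction rule: rtranclp_induct)
        case base then show ?case using KS w by (simp add: I_def)
      next
        case (step y z)
        obtain u x where u: "u \<in> y" "{x\<in>V. E u x} - y = {x}" "z = insert x y"
          using step(2) by (auto simp: force_step_def)
        have Iy: "I y" using step(3) by simp
        have "(force_step V1 E1)\<^sup>*\<^sup>* (y \<inter> V1 \<union> {}) (insert x y \<inter> V1 \<union> {})"
          unfolding E1_def
        proof (rule proj_step[where E=E and u=u, OF V1V _ u(1,2)])
          show "{} \<subseteq> V1" by simp
          assume xV1: "x \<in> V1 - {}"
          show "u \<in> V1"
          proof (rule ccontr)
            assume "u \<notin> V1"
            have "E u x" using u by auto
            then have uK: "u \<in> K - {v}" using gE[of u x] \<open>u \<notin> V1\<close> by (auto simp: V1_def)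
            then have "x \<in> K" using F2 \<open>E u x\<close> by blast
            then have xv: "x = v" using xV1 by (auto simp: V1_def)
            have "w \<in> y"
            proof (cases "w = u")
              case False
              then have "E u w" using cl uK w by (auto simp: is_clique_def)
              then show ?thesis using u xv w gE[of u w] by auto
            qed (use u in auto)
            then have "v \<in> y" using Iy by (simp add: I_def)
            then show False using u xv by auto
          qed
        qed
        moreover have "I z"
        proof -
          have "v \<in> z" if "w \<in> z"
          proof (cases "w \<in> y")
            case True then show ?thesis using Iy u by (auto simp: I_def)
          next
            case False
            then have xw: "x = w" using that u by auto
            then have "E u w" using u by auto
            then have uK: "u \<in> K" using F2 w gE[of u w] by blast
            show ?thesis
            proof (cases "u = v")
              case True then show ?thesis using u by auto
            next
              case False
              then have "E u v" using cl uK assms(5) unfolding is_clique_def by blast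
              then have "v \<in> {x\<in>V. E u x}" using vV by simp
              moreover have "v \<noteq> x" using xw w by auto
              ultimately have "v \<in> y" using u(2) by blast
              then show ?thesis using u by auto
            qed
          qed
          then show ?thesis using Iy u by (auto simp: I_def)
        qed
        ultimately show ?case using step(3) u(3) by (meson rtranclp_trans)
      qed
      then have "(force_step V1 E1)\<^sup>*\<^sup>* (S \<inter> V1 \<union> {}) (V \<inter> V1 \<union> {})" using chain
        by blast
      moreover have "V \<inter> V1 \<union> {} = V1" "S \<inter> V1 \<union> {} = S \<inter> V1" using V1V by auto
      ultimately have "(force_step V1 E1)\<^sup>*\<^sup>* (S \<inter> V1) V1" by simp
      then have zS': "zero_forcing_set V1 E1 (S \<inter> V1)" by (auto simp: zero_forcing_set_def)
      have "S = S \<inter> V1 \<union> (K - {v, w})" using KS SV w by (auto simp: V1_def)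
      moreover have "(S \<inter> V1) \<inter> (K - {v, w}) = {}" by (auto simp: V1_def)
      moreover have "card (K - {v, w}) = m - 2"
      proof -
        have "card (K - {v, w}) = card K - card {v, w}" using w assms(5) fK by (simp add: card_Diff_subset)
        then show ?thesis using w assms(6) by auto
      qed
      ultimately have "card S = card (S \<inter> V1) + (m - 2)"
        using fS fK card_Un_disjoint[of "S \<inter> V1" "K - {v, w}"] by simp
      then show ?thesis using zf_le[OF zS'] S(2) assms(7) by linarith
    qed
  qed
  obtain w where w: "w \<in> K" "w \<noteq> v"
  proof -
    have "\<not> K \<subseteq> {v}" using cK card_mono[of "{v}" K] by auto
    then show ?thesis using that by auto
  qed
  obtain xx where xx: "xx \<in> K" "xx \<noteq> v" "xx \<noteq> w"
  proof -
    have "\<not> K \<subseteq> {v, w}"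
    proof
      assume "K \<subseteq> {v, w}"
      then have "card K \<le> card {v, w}" by (simp add: card_mono)
      also have "\<dots> \<le> 2" by (simp add: card_insert_le_m1)
      finally show False using cK by simp
    qed
    then show ?thesis using that by auto
  qed
  have NK: "{y\<in>V. E xx y} = K - {xx}"
  proof
    show "{y\<in>V. E xx y} \<subseteq> K - {xx}"
    proof
      fix y assume y: "y \<in> {y\<in>V. E xx y}"
      then have "E xx y" by simp
      then have "y \<in> K" "y \<noteq> xx" using F2[of xx y] xx gE[of xx y] by auto
      then show "y \<in> K - {xx}" by simp
    qed
    show "K - {xx} \<subseteq> {y\<in>V. E xx y}"
    proof
      fix y assume y: "y \<in> K - {xx}"
      have c1: "\<forall>w\<in>K. xx \<noteq> w \<longrightarrow> E xx w" using cl xx(1) by (simp add: is_clique_def)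
      have "xx \<noteq> y" "y \<in> K" using y by auto
      then have "E xx y" using c1 by simp
      moreover have "y \<in> V" using y KV by auto
      ultimately show "y \<in> {y\<in>V. E xx y}" by simp
    qed
  qed
  have clo: "(force_step V E)\<^sup>*\<^sup>* B (insert w B)" if "K - {v, w} \<subseteq> B" "v \<in> B" for B
  proof (cases "w \<in> B")
    case True then show ?thesis by (simp add: insert_absorb)
  next
    case False
    have "{y\<in>V. E xx y} - B = {w}" using NK that False w xx by auto
    moreover have "xx \<in> B" using that xx by auto
    ultimately have "force_step V E B (insert w B)" unfolding force_step_def by blast
    then show ?thesis by simp
  qed
  define gg where "gg B = B \<union> (K - {v, w}) \<union> (if v \<in> B then {w} else {})" for B
  have upper: "zf_number V E \<le> zf_number V1 E1 + m - 2"
  proof -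
    obtain S1 where S1: "zero_forcing_set V1 E1 S1" "card S1 = zf_number V1 E1" using zf_ex by blast
    have S1V: "S1 \<subseteq> V1" and chain: "(force_step V1 E1)\<^sup>*\<^sup>* S1 V1" using S1 by (auto simp: zero_forcing_set_def)
    define S where "S = S1 \<union> (K - {v, w})"
    have lift: "(force_step V E)\<^sup>*\<^sup>* (gg Bl1) (gg Bl1')"
      if fs: "force_step V1 E1 Bl1 Bl1'" "Bl1 \<subseteq> V1" for Bl1 Bl1'
    proof -
      obtain u z where u: "u \<in> Bl1" "{x\<in>V1. E1 u x} - Bl1 = {z}" "Bl1' = insert z Bl1"
        using fs(1) by (auto simp: force_step_def)
      define B where "B = gg Bl1"
      have uV1: "u \<in> V1" using u fs by auto
      have nbr: "x \<in> B" if "x \<in> V" "E u x" "x \<notin> V1" for x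
      proof -
        have xK: "x \<in> K - {v}" using that by (auto simp: V1_def)
        show ?thesis
        proof (cases "u = v")
          case True
          then show ?thesis using u xK by (auto simp: B_def gg_def)
        next
          case False
          have "u \<in> K" using F2[OF xK] gE[of u x] that by blast
          then show ?thesis using False uV1 by (auto simp: V1_def)
        qed
      qed
      have BV1: "B \<inter> V1 = Bl1" using fs(2) w by (auto simp: B_def gg_def V1_def)
      have "{x\<in>V. E u x} - B = {x\<in>V1. E1 u x} - Bl1"
      proof
        show "{x\<in>V. E u x} - B \<subseteq> {x\<in>V1. E1 u x} - Bl1"
        proof
          fix x assume x: "x \<in> {x\<in>V. E u x} - B"
          then have xV1: "x \<in> V1" using nbr by blast
          have "Bl1 \<subseteq> B" by (auto simp: B_def gg_def)
          then show "x \<in> {x\<in>V1. E1 u x} - Bl1" using x xV1 uV1 by (auto simp: E1_def induced_def)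
        qed
        show "{x\<in>V1. E1 u x} - Bl1 \<subseteq> {x\<in>V. E u x} - B"
          using BV1 V1V by (auto simp: E1_def induced_def)
      qed
      then have "{x\<in>V. E u x} - B = {z}" using u by simp
      moreover have "u \<in> B" using u by (auto simp: B_def gg_def)
      ultimately have st: "force_step V E B (insert z B)" unfolding force_step_def by blast
      have zn: "z \<notin> Bl1" using u by auto
      have "(force_step V E)\<^sup>*\<^sup>* (insert z B) (gg (insert z Bl1))"
      proof (cases "z = v")
        case True
        have "(force_step V E)\<^sup>*\<^sup>* (insert z B) (insert w (insert z B))"
          by (rule clo) (use True in \<open>auto simp: B_def gg_def\<close>)
        moreover have "insert w (insert z B) = gg (insert z Bl1)"
          using True zn by (auto simp: B_def gg_def)
        ultimately show ?thesis by simp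
      next
        case False
        then have "insert z B = gg (insert z Bl1)" by (auto simp: B_def gg_def)
        then show ?thesis by simp
      qed
      then show ?thesis using st u(3) B_def by (meson converse_rtranclp_into_rtranclp)
    qed
    have "B \<subseteq> V1 \<and> (force_step V E)\<^sup>*\<^sup>* (gg S1) (gg B)" if "(force_step V1 E1)\<^sup>*\<^sup>* S1 B" for B
      using that
    proof (induction rule: rtranclp_induct)
      case base then show ?case using S1V by simp
    next
      case (step y z)
      have "z \<subseteq> V1" using step(2,3) by (auto simp: force_step_def)
      then show ?case using step lift by (meson rtranclp_trans)
    qed
    then have c2: "(force_step V E)\<^sup>*\<^sup>* (gg S1) (gg V1)" using chain by blast
    have "(force_step V E)\<^sup>*\<^sup>* S (gg S1)"
    proof (cases "v \<in> S1")
      case True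
      then have "gg S1 = insert w S" by (auto simp: gg_def S_def)
      then show ?thesis using clo[of S] True by (auto simp: S_def)
    next
      case False then show ?thesis by (simp add: gg_def S_def)
    qed
    moreover have "gg V1 = V" using vV1 w KV by (auto simp: gg_def V1_def)
    ultimately have "(force_step V E)\<^sup>*\<^sup>* S V" using c2 by (metis rtranclp_trans)
    moreover have "S \<subseteq> V" using S1V V1V KV by (auto simp: S_def)
    ultimately have zS: "zero_forcing_set V E S" by (simp add: zero_forcing_set_def)
    have "card (K - {v, w}) = m - 2"
    proof -
      have "card (K - {v, w}) = card K - card {v, w}" using w assms(5) fK by (simp add: card_Diff_subset)
      then show ?thesis using w assms(6) by auto
    qed
    moreover have "S1 \<inter> (K - {v, w}) = {}" using S1V by (auto simp: V1_def)
    moreover have "finite S1" using S1V fV1 finite_subset by blast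
    ultimately have "card S = card S1 + (m - 2)" unfolding S_def using fK
      by (simp add: card_Un_disjoint)
    then show ?thesis using zf_le[OF zS] S1(2) assms(7) by linarith
  qed
  have eq: "zf_number V E = zf_number V1 E1 + m - 2" using lower upper by linarith
  show ?thesis using eq ZK assms(7) unfolding V1_def E1_def by simp
qed

end
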